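(* In the setting below, for all $i,j,k\in\{1,\dots,q\}$: (i) $[y_i,z_j]=[\tilde y_i,\tilde z_j]=0$ and $[\tilde y_i,z_j]=-[y_i,\tilde z_j]=\delta_{ij}A_\lambda$; (ii) $[y_i,y_j]=-[z_i,z_j]$, $[\tilde y_i,\tilde y_j]=-[\tilde z_i,\tilde z_j]$, $[y_i,\tilde y_j]=-[z_i,\tilde z_j]$; (iii) $[[y_i,y_j],y_k]=[[\tilde y_i,\tilde y_j],\tilde y_k]=0$, $[[y_i,y_j],\tilde y_k]=\langle\lambda,\lambda\rangle(\delta_{jk}y_i+\delta_{ik}y_j)$, $[[\tilde y_i,\tilde y_j],y_k]=-\langle\lambda,\lambda\rangle(\delta_{jk}\tilde y_i+\delta_{ik}\tilde y_j)$, $[[y_i,\tilde y_j],y_k]=-\langle\lambda,\lambda\rangle\delta_{jk}y_i$, $[[y_i,\tilde y_j],\tilde y_k]=\langle\lambda,\lambda\rangle\delta_{ik}\tilde y_j$; (iv) $[[y_i,y_j],z_k]=[[\tilde y_i,\tilde y_j],\tilde z_k]=0$, $[[y_i,y_j],\tilde z_k]=\langle\lambda,\lambda\rangle(\delta_{jk}z_i+\delta_{ik}z_j)$, $[[\tilde y_i,\tilde y_j],z_k]=-\langle\lambda,\lambda\rangle(\delta_{jk}\tilde z_i+\delta_{ik}\tilde z_j)$, $[[y_i,\tilde y_j],z_k]=-\langle\lambda,\lambda\rangle\delta_{jk}z_i$, $[[y_i,\tilde y_j],\tilde z_k]=\langle\lambda,\lambda\rangle\delta_{ik}\tilde z_j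$.
   Context: Setting: $(\mathfrak g,\mathfrak k,\theta)$ a reductive symmetric superpair of even type ($\mathfrak g$ finite-dimensional complex Lie superalgebra, $\theta$ even involution with $(+1)$-eigenspace $\mathfrak k$ and $(-1)$-eigenspace $\mathfrak p$, $\mathfrak g$ semisimple as $\mathfrak g_0$-module, $\mathfrak z(\mathfrak g)\subset\mathfrak g_0$, $b$ a fixed non-degenerate even supersymmetric $\mathfrak g$- and $\theta$-invariant bilinear form), with even Cartan subspace $\mathfrak a$ ($\mathfrak a\subset\mathfrak p_0$, $\mathfrak a=\mathfrak z_{\mathfrak p}(\mathfrak a)$, $\operatorname{ad}\mathfrak a|_{\mathfrak g_0}$ semisimple). $\mathfrak g^\lambda_j$ denotes the $\lambda$-weight space of $\mathfrak a$ in $\mathfrak g_j$, $\Sigma_j$ the nonzero weights in $\mathfrak g_j$, $m_{\lambda,1}=\dim\mathfrak g_1^\lambda$. $b|_{\mathfrak a}$ is non-degenerate; $A_\lambda\in\mathfrak a$ is defined by $b(A_\lambda,h)=\lambda(h)$ for $h\in\mathfrak a$, and $\langle\lambda,\lambda\rangle=b(A_\lambda,A_\lambda)$. Let $\lambda\in\bar\Sigma_1=\{\lambda\in\Sigma_1:2\lambda\notin\Sigma_0\}$. Known facts: $m_{\lambda,1}=2q$ is even and $b^\theta(x,y)=b(x,\theta y)$ is a symplectic form on $\mathfrak g_1^\lambda$. Let $x_1,\dots,x_q,\tilde x_1,\dots,\tilde x_q$ be a basis of $\mathfrak g_1^\lambda$ with $b^\theta(x_i,x_j)=b^\theta(\tilde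 x_i,\tilde x_j)=0$, $b^\theta(x_i,\tilde x_j)=2\delta_{ij}$, and write $x_j=y_j+z_j$, $\tilde x_j=\tilde y_j+\tilde z_j$ with $y_j,\tilde y_j\in\mathfrak k$, $z_j,\tilde z_j\in\mathfrak p$. (Then $[h,y_i]=\lambda(h)z_i$, $[h,z_i]=\lambda(h)y_i$ etc. for $h\in\mathfrak a$, and $b(y_i,\tilde y_j)=b(\tilde z_j,z_i)=\delta_{ij}$.) *)

theory Defs
  imports "HOL-Analysis.Analysis"
begin

text \<open>Model: the finite-dimensional complex Lie superalgebra g is the space complex^'n
  (every finite-dimensional complex vector space is of this form), with complex scalar
  multiplication (*s).  The Z/2-grading is g = g0 (+) g1.  Parities are natural numbers
  0 / 1; grd g0 g1 i is the homogeneous component of parity i (mod 2).\<close>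

type_synonym 'n cvec = "complex ^ 'n"

definition grd :: "'n::finite cvec set \<Rightarrow> 'n::finite cvec set \<Rightarrow> nat \<Rightarrow> 'n::finite cvec set" where
  "grd g0 g1 i = (if even i then g0 else g1)"

definition kron :: "nat \<Rightarrow> nat \<Rightarrow> complex" where
  "kron i j = (if i = j then 1 else 0)"

text \<open>Lie superalgebra: bilinear graded bracket, super skew-symmetry, super Jacobi.\<close>
definition lie_superalgebra ::
  "('n::finite cvec \<Rightarrow> 'n::finite cvec \<Rightarrow> 'n::finite cvec) \<Rightarrow> 'n::finite cvec set \<Rightarrow> 'n::finite cvec set \<Rightarrow> bool" where
  "lie_superalgebra br g0 g1 \<longleftrightarrow>
     vec.subspace g0 \<and> vec.subspace g1 \<and> g0 \<inter> g1 = {0} \<and>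
     (\<forall>v. \<exists>u\<in>g0. \<exists>w\<in>g1. v = u + w) \<and>
     (\<forall>x. Vector_Spaces.linear (*s) (*s) (br x)) \<and>
     (\<forall>y. Vector_Spaces.linear (*s) (*s) (\<lambda>x. br x y)) \<and>
     (\<forall>i j x y. i < 2 \<and> j < 2 \<and> x \<in> grd g0 g1 i \<and> y \<in> grd g0 g1 j \<longrightarrow>
        br x y \<in> grd g0 g1 (i + j) \<and>
        br x y = - (((-1) ^ (i * j)) *s br y x)) \<and>
     (\<forall>i j x y w. i < 2 \<and> j < 2 \<and> x \<in> grd g0 g1 i \<and> y \<in> grd g0 g1 j \<longrightarrow>
        br x (br y w) = br (br x y) w + ((-1) ^ (i * j)) *s br y (br x w))"

text \<open>Centre of the Lie superalgebra.\<close>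
definition centre :: "('n::finite cvec \<Rightarrow> 'n::finite cvec \<Rightarrow> 'n::finite cvec) \<Rightarrow> 'n::finite cvec set" where
  "centre br = {x. \<forall>y. br x y = 0}"

text \<open>g is semisimple as a g0-module: every g0-submodule has a g0-stable complement.\<close>
definition g0_submodule ::
  "('n::finite cvec \<Rightarrow> 'n::finite cvec \<Rightarrow> 'n::finite cvec) \<Rightarrow> 'n::finite cvec set \<Rightarrow> 'n::finite cvec set \<Rightarrow> bool" where
  "g0_submodule br g0 V \<longleftrightarrow> vec.subspace V \<and> (\<forall>u\<in>g0. \<forall>v\<in>V. br u v \<in> V)"

definition semisimple_g0_module ::
  "('n::finite cvec \<Rightarrow> 'n::finite cvec \<Rightarrow> 'n::finite cvec) \<Rightarrow> 'n::finite cvec set \<Rightarrow> bool" where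
  "semisimple_g0_module br g0 \<longleftrightarrow>
     (\<forall>V. g0_submodule br g0 V \<longrightarrow>
        (\<exists>W. g0_submodule br g0 W \<and> V \<inter> W = {0} \<and> (\<forall>v. \<exists>a\<in>V. \<exists>c\<in>W. v = a + c)))"

text \<open>Reductive symmetric superpair of even type (g,k,theta) with form b.\<close>
definition reductive_symmetric_superpair ::
  "('n::finite cvec \<Rightarrow> 'n::finite cvec \<Rightarrow> 'n::finite cvec) \<Rightarrow> 'n::finite cvec set \<Rightarrow> 'n::finite cvec set \<Rightarrow>
   ('n::finite cvec \<Rightarrow> 'n::finite cvec) \<Rightarrow> ('n::finite cvec \<Rightarrow> 'n::finite cvec \<Rightarrow> complex) \<Rightarrow> bool" where
  "reductive_symmetric_superpair br g0 g1 \<theta> b \<longleftrightarrow>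
     lie_superalgebra br g0 g1 \<and>
     \<comment> \<open>theta is an even involutive automorphism\<close>
     Vector_Spaces.linear (*s) (*s) \<theta> \<and>
     (\<forall>x. \<theta> (\<theta> x) = x) \<and>
     (\<forall>x y. \<theta> (br x y) = br (\<theta> x) (\<theta> y)) \<and>
     \<theta> ` g0 \<subseteq> g0 \<and> \<theta> ` g1 \<subseteq> g1 \<and>
     \<comment> \<open>g semisimple as g0-module, centre contained in g0\<close>
     semisimple_g0_module br g0 \<and>
     centre br \<subseteq> g0 \<and>
     \<comment> \<open>b: bilinear, non-degenerate, even, supersymmetric, invariant, theta-invariant\<close>
     (\<forall>x. Vector_Spaces.linear (*s) (*) (b x)) \<and>
     (\<forall>y. Vector_Spaces.linear (*s) (*) (\<lambda>x. b x y)) \<and>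
     (\<forall>x. (\<forall>y. b x y = 0) \<longrightarrow> x = 0) \<and>
     (\<forall>x\<in>g0. \<forall>y\<in>g1. b x y = 0 \<and> b y x = 0) \<and>
     (\<forall>i j x y. i < 2 \<and> j < 2 \<and> x \<in> grd g0 g1 i \<and> y \<in> grd g0 g1 j \<longrightarrow>
        b x y = (-1) ^ (i * j) * b y x) \<and>
     (\<forall>x y z. b (br x y) z = b x (br y z)) \<and>
     (\<forall>x y. b (\<theta> x) (\<theta> y) = b x y)"

definition kpart :: "('n::finite cvec \<Rightarrow> 'n::finite cvec) \<Rightarrow> 'n::finite cvec set" where
  "kpart \<theta> = {x. \<theta> x = x}"

definition ppart :: "('n::finite cvec \<Rightarrow> 'n::finite cvec) \<Rightarrow> 'n::finite cvec set" where
  "ppart \<theta> = {x. \<theta> x = - x}"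

text \<open>Even Cartan subspace a: a subset of p0, equal to its centraliser in p,
  and ad h restricted to g0 semisimple (diagonalisable) for every h in a.\<close>
definition even_cartan_subspace ::
  "('n::finite cvec \<Rightarrow> 'n::finite cvec \<Rightarrow> 'n::finite cvec) \<Rightarrow> 'n::finite cvec set \<Rightarrow> ('n::finite cvec \<Rightarrow> 'n::finite cvec) \<Rightarrow>
   'n::finite cvec set \<Rightarrow> bool" where
  "even_cartan_subspace br g0 \<theta> a \<longleftrightarrow>
     vec.subspace a \<and> a \<subseteq> ppart \<theta> \<inter> g0 \<and>
     a = {x \<in> ppart \<theta>. \<forall>h\<in>a. br x h = 0} \<and>
     (\<forall>h\<in>a. vec.span {x \<in> g0. \<exists>c. br h x = c *s x} = g0)"

text \<open>Weight space of lambda (a functional, only its values on a matter) in V.\<close>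
definition wspace ::
  "('n::finite cvec \<Rightarrow> 'n::finite cvec \<Rightarrow> 'n::finite cvec) \<Rightarrow> 'n::finite cvec set \<Rightarrow> 'n::finite cvec set \<Rightarrow>
   ('n::finite cvec \<Rightarrow> complex) \<Rightarrow> 'n::finite cvec set" where
  "wspace br a V lam = {x \<in> V. \<forall>h\<in>a. br h x = lam h *s x}"

text \<open>lambda is a root in V: a nonzero weight (on a) with nonzero weight space.\<close>
definition is_root ::
  "('n::finite cvec \<Rightarrow> 'n::finite cvec \<Rightarrow> 'n::finite cvec) \<Rightarrow> 'n::finite cvec set \<Rightarrow> 'n::finite cvec set \<Rightarrow>
   ('n::finite cvec \<Rightarrow> complex) \<Rightarrow> bool" where
  "is_root br a V lam \<longleftrightarrow> (\<exists>h\<in>a. lam h \<noteq> 0) \<and> wspace br a V lam \<noteq> {0}"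

end

theory Submission
  imports Defs
begin

locale SP =
  fixes br :: "'n::finite cvec \<Rightarrow> 'n cvec \<Rightarrow> 'n cvec"
    and g0 g1 a :: "'n cvec set"
    and \<theta> :: "'n cvec \<Rightarrow> 'n cvec"
    and b :: "'n cvec \<Rightarrow> 'n cvec \<Rightarrow> complex"
    and lam :: "'n cvec \<Rightarrow> complex"
    and A :: "'n cvec"
  assumes pair: "reductive_symmetric_superpair br g0 g1 \<theta> b"
    and cartan: "even_cartan_subspace br g0 \<theta> a"
    and root1: "is_root br a g1 lam"
    and not_root0: "\<not> is_root br a g0 (\<lambda>h. 2 * lam h)"
    and A_mem: "A \<in> a"
    and A_def: "\<forall>h\<in>a. b A h = lam h"
begin

lemma lie: "lie_superalgebra br g0 g1" using pair unfolding reductive_symmetric_superpair_def by blast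

lemma sub0: "vec.subspace g0" and sub1: "vec.subspace g1"
  using lie unfolding lie_superalgebra_def by blast+

lemma dec01: "\<exists>u\<in>g0. \<exists>w\<in>g1. v = u + w"
  using lie unfolding lie_superalgebra_def by blast

lemma linL: "Vector_Spaces.linear (*s) (*s) (\<lambda>x. br x y)"
  and linR: "Vector_Spaces.linear (*s) (*s) (br x)"
  using lie unfolding lie_superalgebra_def by blast+

lemma br_add1: "br (u + v) w = br u w + br v w"
  using linL[of w] unfolding Vector_Spaces.linear_iff by blast
lemma br_scale1: "br (c *s u) w = c *s br u w"
  using linL[of w] unfolding Vector_Spaces.linear_iff by blast
lemma br_add2: "br w (u + v) = br w u + br w v"
  using linR[of w] unfolding Vector_Spaces.linear_iff by blast
lemma br_scale2: "br w (c *s u) = c *s br w u"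
  using linR[of w] unfolding Vector_Spaces.linear_iff by blast

lemma neg_eq: "- v = (-1::complex) *s (v::'n cvec)" by (simp add: vec_eq_iff)
lemma diff_eq: "u - v = u + (-1::complex) *s (v::'n cvec)" by (simp add: vec_eq_iff)

lemma br_neg1: "br (- u) w = - br u w"
  using br_scale1[of "-1" u w] by (simp only: neg_eq[symmetric])
lemma br_neg2: "br w (- u) = - br w u"
  using br_scale2[of w "-1" u] by (simp only: neg_eq[symmetric])
lemma br_diff1: "br (u - v) w = br u w - br v w" by (simp only: diff_conv_add_uminus br_add1 br_neg1)
lemma br_diff2: "br w (u - v) = br w u - br w v" by (simp only: diff_conv_add_uminus br_add2 br_neg2)
lemma br_zero1: "br 0 w = 0" using br_scale1[of 0 0 w] by simp
lemma br_zero2: "br w 0 = 0" using br_scale2[of w 0 0] by simp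

lemmas br_lin = br_add1 br_add2 br_scale1 br_scale2 br_neg1 br_neg2 br_diff1 br_diff2 br_zero1 br_zero2

lemma grd0: "grd g0 g1 0 = g0" and grd1: "grd g0 g1 1 = g1" and grd2: "grd g0 g1 (1+1) = g0"
  by (simp_all add: grd_def)

lemma gr_raw: "i < 2 \<Longrightarrow> j < 2 \<Longrightarrow> x \<in> grd g0 g1 i \<Longrightarrow> y \<in> grd g0 g1 j \<Longrightarrow>
        br x y \<in> grd g0 g1 (i + j) \<and> br x y = - (((-1) ^ (i * j)) *s br y x)"
  using lie unfolding lie_superalgebra_def by blast

lemma jac_raw: "i < 2 \<Longrightarrow> j < 2 \<Longrightarrow> x \<in> grd g0 g1 i \<Longrightarrow> y \<in> grd g0 g1 j \<Longrightarrow>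
        br x (br y w) = br (br x y) w + ((-1) ^ (i * j)) *s br y (br x w)"
  using lie unfolding lie_superalgebra_def by blast

lemma ee_mem: "u \<in> g0 \<Longrightarrow> v \<in> g0 \<Longrightarrow> br u v \<in> g0"
proof -
  assume "u \<in> g0" "v \<in> g0"
  then have "br u v \<in> grd g0 g1 (0+0)" by (intro conjunct1[OF gr_raw]) (simp_all add: grd_def)
  then show ?thesis by (simp add: grd_def)
qed
lemma ee_sk: "u \<in> g0 \<Longrightarrow> v \<in> g0 \<Longrightarrow> br u v = - br v u"
proof -
  assume "u \<in> g0" "v \<in> g0"
  then have "br u v = - (((-1) ^ (0 * 0)) *s br v u)" by (intro conjunct2[OF gr_raw]) (simp_all add: grd_def)
  then show ?thesis by (simp add: vec_eq_iff)
qed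
lemma ee: "u \<in> g0 \<Longrightarrow> v \<in> g0 \<Longrightarrow> br u v \<in> g0 \<and> br u v = - br v u"
  using ee_mem ee_sk by blast
lemma eo_mem: "u \<in> g0 \<Longrightarrow> v \<in> g1 \<Longrightarrow> br u v \<in> g1"
proof -
  assume "u \<in> g0" "v \<in> g1"
  then have "br u v \<in> grd g0 g1 (0+1)" by (intro conjunct1[OF gr_raw]) (simp_all add: grd_def)
  then show ?thesis by (simp add: grd_def)
qed
lemma eo_sk: "u \<in> g0 \<Longrightarrow> v \<in> g1 \<Longrightarrow> br u v = - br v u"
proof -
  assume "u \<in> g0" "v \<in> g1"
  then have "br u v = - (((-1) ^ (0 * 1)) *s br v u)" by (intro conjunct2[OF gr_raw]) (simp_all add: grd_def)
  then show ?thesis by (simp add: vec_eq_iff)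
qed
lemma eo: "u \<in> g0 \<Longrightarrow> v \<in> g1 \<Longrightarrow> br u v \<in> g1 \<and> br u v = - br v u"
  using eo_mem eo_sk by blast
lemma oe_mem: "u \<in> g1 \<Longrightarrow> v \<in> g0 \<Longrightarrow> br u v \<in> g1"
proof -
  assume "u \<in> g1" "v \<in> g0"
  then have "br u v \<in> grd g0 g1 (1+0)" by (intro conjunct1[OF gr_raw]) (simp_all add: grd_def)
  then show ?thesis by (simp add: grd_def)
qed
lemma oe_sk: "u \<in> g1 \<Longrightarrow> v \<in> g0 \<Longrightarrow> br u v = - br v u"
proof -
  assume "u \<in> g1" "v \<in> g0"
  then have "br u v = - (((-1) ^ (1 * 0)) *s br v u)" by (intro conjunct2[OF gr_raw]) (simp_all add: grd_def)
  then show ?thesis by (simp add: vec_eq_iff)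
qed
lemma oe: "u \<in> g1 \<Longrightarrow> v \<in> g0 \<Longrightarrow> br u v \<in> g1 \<and> br u v = - br v u"
  using oe_mem oe_sk by blast
lemma oo_mem: "u \<in> g1 \<Longrightarrow> v \<in> g1 \<Longrightarrow> br u v \<in> g0"
proof -
  assume "u \<in> g1" "v \<in> g1"
  then have "br u v \<in> grd g0 g1 (1+1)" by (intro conjunct1[OF gr_raw]) (simp_all add: grd_def)
  then show ?thesis by (simp add: grd_def)
qed
lemma oo_sk: "u \<in> g1 \<Longrightarrow> v \<in> g1 \<Longrightarrow> br u v = br v u"
proof -
  assume "u \<in> g1" "v \<in> g1"
  then have "br u v = - (((-1) ^ (1 * 1)) *s br v u)" by (intro conjunct2[OF gr_raw]) (simp_all add: grd_def)
  then show ?thesis by (simp add: vec_eq_iff)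
qed
lemma oo: "u \<in> g1 \<Longrightarrow> v \<in> g1 \<Longrightarrow> br u v \<in> g0 \<and> br u v = br v u"
  using oo_mem oo_sk by blast
lemma jac00: "u \<in> g0 \<Longrightarrow> v \<in> g0 \<Longrightarrow> br u (br v w) = br (br u v) w + br v (br u w)"
proof -
  assume "u \<in> g0" "v \<in> g0"
  then have "br u (br v w) = br (br u v) w + ((-1)^(0*0)) *s br v (br u w)"
    by (intro jac_raw) (simp_all add: grd_def)
  then show ?thesis by simp
qed
lemma jac01: "u \<in> g0 \<Longrightarrow> v \<in> g1 \<Longrightarrow> br u (br v w) = br (br u v) w + br v (br u w)"
proof -
  assume "u \<in> g0" "v \<in> g1"
  then have "br u (br v w) = br (br u v) w + ((-1)^(0*1)) *s br v (br u w)"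
    by (intro jac_raw) (simp_all add: grd_def)
  then show ?thesis by simp
qed
lemma jac0: "u \<in> g0 \<Longrightarrow> v \<in> g0 \<or> v \<in> g1 \<Longrightarrow> br u (br v w) = br (br u v) w + br v (br u w)"
  using jac00 jac01 by blast
lemma jac11: "u \<in> g1 \<Longrightarrow> v \<in> g1 \<Longrightarrow> br u (br v w) = br (br u v) w - br v (br u w)"
proof -
  assume "u \<in> g1" "v \<in> g1"
  then have "br u (br v w) = br (br u v) w + ((-1)^(1*1)) *s br v (br u w)"
    by (intro jac_raw) (simp_all add: grd_def)
  then show ?thesis by (simp add: vec_eq_iff)
qed

lemmas vs = vector_smult_assoc vector_sadd_rdistrib vector_add_ldistrib vector_ssub_ldistrib
  vector_sub_rdistrib vector_smult_rneg vector_smult_lneg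

lemma br_sum2: "finite F \<Longrightarrow> br w (sum f F) = (\<Sum>t\<in>F. br w (f t))"
  by (induction F rule: finite_induct) (simp_all add: br_add2 br_zero2)

(* theta *)
lemma thlin: "Vector_Spaces.linear (*s) (*s) \<theta>"
  using pair unfolding reductive_symmetric_superpair_def by blast
lemma thth: "\<theta> (\<theta> x) = x"
  using pair unfolding reductive_symmetric_superpair_def by auto
lemma thbr: "\<theta> (br x y) = br (\<theta> x) (\<theta> y)"
  using pair unfolding reductive_symmetric_superpair_def by auto
lemma thg0: "x \<in> g0 \<Longrightarrow> \<theta> x \<in> g0"
  using pair unfolding reductive_symmetric_superpair_def by blast
lemma thg1: "x \<in> g1 \<Longrightarrow> \<theta> x \<in> g1"
  using pair unfolding reductive_symmetric_superpair_def by blast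

lemma th_add: "\<theta> (u + v) = \<theta> u + \<theta> v" using thlin unfolding Vector_Spaces.linear_iff by blast
lemma th_scale: "\<theta> (c *s u) = c *s \<theta> u" using thlin unfolding Vector_Spaces.linear_iff by blast
lemma th_neg: "\<theta> (- u) = - \<theta> u"
  using th_scale[of "-1" u] by (simp only: neg_eq[symmetric])
lemma th_diff: "\<theta> (u - v) = \<theta> u - \<theta> v" by (simp only: diff_conv_add_uminus th_add th_neg)
lemma th_zero: "\<theta> 0 = 0" using th_scale[of 0 0] by simp
lemmas th_lin = th_add th_scale th_neg th_diff th_zero

(* b *)
lemma b_linR: "Vector_Spaces.linear (*s) (*) (b x)"
  and b_linL: "Vector_Spaces.linear (*s) (*) (\<lambda>x. b x y)"
  and b_nd: "(\<forall>y. b x y = 0) \<Longrightarrow> x = 0"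
  and b_eo0: "\<forall>x\<in>g0. \<forall>y\<in>g1. b x y = 0 \<and> b y x = 0"
  and b_sym_raw: "\<forall>i j x y. i < 2 \<and> j < 2 \<and> x \<in> grd g0 g1 i \<and> y \<in> grd g0 g1 j \<longrightarrow>
        b x y = (-1) ^ (i * j) * b y x"
  and b_inv: "b (br x y) z = b x (br y z)"
  and b_th: "b (\<theta> x) (\<theta> y) = b x y"
  using pair unfolding reductive_symmetric_superpair_def by blast+

lemma b_add1: "b (u + v) w = b u w + b v w" using b_linL[of w] unfolding Vector_Spaces.linear_iff by blast
lemma b_scale1: "b (c *s u) w = c * b u w" using b_linL[of w] unfolding Vector_Spaces.linear_iff by blast
lemma b_add2: "b w (u + v) = b w u + b w v" using b_linR[of w] unfolding Vector_Spaces.linear_iff by blast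
lemma b_scale2: "b w (c *s u) = c * b w u" using b_linR[of w] unfolding Vector_Spaces.linear_iff by blast
lemma b_neg1: "b (- u) w = - b u w"
  using b_scale1[of "-1" u w] by (simp only: neg_eq[symmetric]) simp
lemma b_neg2: "b w (- u) = - b w u"
  using b_scale2[of w "-1" u] by (simp only: neg_eq[symmetric]) simp
lemma b_diff1: "b (u - v) w = b u w - b v w" by (simp only: diff_conv_add_uminus b_add1 b_neg1)
lemma b_diff2: "b w (u - v) = b w u - b w v" by (simp only: diff_conv_add_uminus b_add2 b_neg2)
lemma b_zero1: "b 0 w = 0" using b_scale1[of 0 0 w] by simp
lemma b_zero2: "b w 0 = 0" using b_scale2[of w 0 0] by simp
lemmas b_lin = b_add1 b_add2 b_scale1 b_scale2 b_neg1 b_neg2 b_diff1 b_diff2 b_zero1 b_zero2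

lemma b_ee: "x \<in> g0 \<Longrightarrow> y \<in> g0 \<Longrightarrow> b x y = b y x"
  using b_sym_raw[rule_format, of 0 0 x y] by (simp add: grd_def)
lemma b_oo: "x \<in> g1 \<Longrightarrow> y \<in> g1 \<Longrightarrow> b x y = - b y x"
  using b_sym_raw[rule_format, of 1 1 x y] by (simp add: grd_def)
lemma b_eo: "x \<in> g0 \<Longrightarrow> y \<in> g1 \<Longrightarrow> b x y = 0" and b_oe: "x \<in> g1 \<Longrightarrow> y \<in> g0 \<Longrightarrow> b x y = 0"
  using b_eo0 by blast+

(* cartan *)
lemma a_sub: "vec.subspace a" and a_pg: "a \<subseteq> ppart \<theta> \<inter> g0"
  and a_char: "a = {x \<in> ppart \<theta>. \<forall>h\<in>a. br x h = 0}"
  and a_diag: "\<forall>h\<in>a. vec.span {x \<in> g0. \<exists>c. br h x = c *s x} = g0"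
  using cartan unfolding even_cartan_subspace_def by blast+

lemma a_g0: "h \<in> a \<Longrightarrow> h \<in> g0" using a_pg by blast
lemma a_th: "h \<in> a \<Longrightarrow> \<theta> h = - h" using a_pg unfolding ppart_def by blast
lemma a_comm: "h \<in> a \<Longrightarrow> k \<in> a \<Longrightarrow> br h k = 0"
  using a_char by blast
lemma a_intro: "\<theta> w = - w \<Longrightarrow> w \<in> g0 \<Longrightarrow> (\<forall>h\<in>a. br h w = 0) \<Longrightarrow> w \<in> a"
proof -
  assume 1: "\<theta> w = - w" "w \<in> g0" "\<forall>h\<in>a. br h w = 0"
  have "\<forall>h\<in>a. br w h = 0"
  proof
    fix h assume h: "h \<in> a"
    have "br w h = - br h w" using ee[OF 1(2) a_g0[OF h]] by blast
    then show "br w h = 0" using 1(3) h by simp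
  qed
  then show ?thesis using 1 a_char unfolding ppart_def by blast
qed

lemma g0_add: "u \<in> g0 \<Longrightarrow> v \<in> g0 \<Longrightarrow> u + v \<in> g0" using sub0 vec.subspace_add by blast
lemma g0_scale: "u \<in> g0 \<Longrightarrow> c *s u \<in> g0" using sub0 vec.subspace_scale by blast
lemma g0_diff: "u \<in> g0 \<Longrightarrow> v \<in> g0 \<Longrightarrow> u - v \<in> g0" using sub0 vec.subspace_diff by blast
lemma g1_add: "u \<in> g1 \<Longrightarrow> v \<in> g1 \<Longrightarrow> u + v \<in> g1" using sub1 vec.subspace_add by blast
lemma g1_scale: "u \<in> g1 \<Longrightarrow> c *s u \<in> g1" using sub1 vec.subspace_scale by blast
lemma g1_diff: "u \<in> g1 \<Longrightarrow> v \<in> g1 \<Longrightarrow> u - v \<in> g1" using sub1 vec.subspace_diff by blast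


(* nondegeneracy of b on a *)
lemma N1: "w \<in> a \<Longrightarrow> h \<in> a \<Longrightarrow> b w (br h u) = 0"
proof -
  assume "w \<in> a" "h \<in> a"
  then have "br w h = 0" by (rule a_comm)
  then show ?thesis using b_inv[of w h u] b_zero1 by simp
qed

lemma N2:
  assumes wa: "w \<in> a" and wo: "\<forall>h\<in>a. b h w = 0" and u0: "u \<in> g0" and uc: "\<forall>h\<in>a. br h u = 0"
  shows "b w u = 0"
proof -
  define uk where "uk = (1/2::complex) *s (u + \<theta> u)"
  define up where "up = (1/2::complex) *s (u - \<theta> u)"
  have dec: "u = uk + up" unfolding uk_def up_def by (simp add: vec_eq_iff field_simps)
  have thk: "\<theta> uk = uk" unfolding uk_def by (simp add: th_lin thth vec_eq_iff algebra_simps)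
  have thp: "\<theta> up = - up" unfolding up_def by (simp add: th_lin thth vec_eq_iff algebra_simps)
  have "b w uk = b (\<theta> w) (\<theta> uk)" by (simp add: b_th)
  also have "\<dots> = - b w uk" using a_th[OF wa] thk by (simp add: b_neg1)
  finally have bk: "b w uk = 0" by simp
  have up0: "up \<in> g0" unfolding up_def using u0 by (intro g0_scale g0_diff thg0)
  have "br h up = 0" if h: "h \<in> a" for h
  proof -
    have "\<theta> (br h (\<theta> u)) = br (\<theta> h) u" by (simp add: thbr thth)
    also have "\<dots> = 0" using a_th[OF h] uc h by (simp add: br_neg1)
    finally have e: "\<theta> (br h (\<theta> u)) = 0" .
    have "br h (\<theta> u) = \<theta> (\<theta> (br h (\<theta> u)))" by (simp only: thth)
    then have "br h (\<theta> u) = 0" using e th_zero by simp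
    then show ?thesis unfolding up_def using uc h by (simp add: br_scale2 br_diff2)
  qed
  then have "up \<in> a" using a_intro thp up0 by blast
  then have "b w up = 0" using b_ee[OF a_g0[OF wa] up0] wo by simp
  then show ?thesis using dec bk by (simp add: b_add2)
qed

lemma rep:
  assumes "v \<in> vec.span E" and E: "\<forall>x\<in>E. \<exists>c. br h x = c *s x"
  shows "\<exists>v0 (n::nat) e c. br h v0 = 0 \<and> (\<forall>t<n. br h (e t) = c t *s e t \<and> c t \<noteq> 0) \<and> v = v0 + (\<Sum>t<n. e t)"
  using assms(1)
proof (induction rule: vec.span_induct_alt)
  case base
  show ?case
    by (intro exI[of _ "0::'n cvec"] exI[of _ "0::nat"] exI[of _ "\<lambda>_::nat. 0::'n cvec"] exI[of _ "\<lambda>_::nat. 1::complex"] conjI)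
       (simp_all add: br_zero2)
next
  case (step c0 x y)
  obtain d where d: "br h x = d *s x" using E step(1) by blast
  obtain v0 and n :: nat and e c where IH: "br h v0 = 0" "\<forall>t<n. br h (e t) = c t *s e t \<and> c t \<noteq> 0"
     "y = v0 + (\<Sum>t<n. e t)" using step(2) by blast
  show ?case
  proof (cases "d = 0")
    case True
    have "br h (c0 *s x + v0) = 0" using IH(1) d True by (simp add: br_add2 br_scale2)
    moreover have "c0 *s x + y = (c0 *s x + v0) + (\<Sum>t<n. e t)" using IH(3) by (simp add: add.assoc)
    ultimately show ?thesis using IH(2) by blast
  next
    case False
    have "\<forall>t<Suc n. br h ((e(n := c0 *s x)) t) = (c(n := d)) t *s (e(n := c0 *s x)) t \<and> (c(n := d)) t \<noteq> 0"
      using IH(2) False d by (auto simp: br_scale2 vector_smult_assoc mult.commute less_Suc_eq)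
    moreover have "(\<Sum>t<Suc n. (e(n := c0 *s x)) t) = (\<Sum>t<n. e t) + c0 *s x"
      by (simp add: sum.lessThan_Suc)
    then have "c0 *s x + y = v0 + (\<Sum>t<Suc n. (e(n := c0 *s x)) t)" using IH(3) by (simp add: algebra_simps)
    ultimately show ?thesis using IH(1) by blast
  qed
qed

lemma descent:
  assumes hA: "h \<in> a" and SA: "S \<subseteq> a" and wa: "w \<in> a"
    and P: "\<forall>u\<in>g0. (\<forall>k\<in>insert h S. br k u = 0) \<longrightarrow> b w u = 0"
  shows "\<forall>u\<in>g0. (\<forall>k\<in>S. br k u = 0) \<longrightarrow> b w u = 0"
proof -
  have h0: "h \<in> g0" using a_g0 hA .
  have key: "\<forall>v v0 e c. v \<in> g0 \<and> (\<forall>k\<in>S. br k v = 0) \<and> br h v0 = 0 \<and>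
      (\<forall>t<n. br h (e t) = c t *s e t \<and> c t \<noteq> 0) \<and> v = v0 + (\<Sum>t<n. e t) \<longrightarrow> b w v = 0" for n :: nat
  proof (induction n)
    case 0
    show ?case using P by auto
  next
    case (Suc n)
    show ?case
    proof (intro allI impI)
      fix v v0 e c
      assume H: "v \<in> g0 \<and> (\<forall>k\<in>S. br k v = 0) \<and> br h v0 = 0 \<and>
      (\<forall>t<Suc n. br h (e t) = c t *s e t \<and> c t \<noteq> 0) \<and> v = v0 + (\<Sum>t<Suc n. e t)"
      define cn where "cn = c n"
      define v' where "v' = br h v - cn *s v"
      have Tv: "br h v = (\<Sum>t<Suc n. c t *s e t)"
        using H by (simp add: br_add2 br_sum2)
      have S1: "(\<Sum>t<n. (c t - cn) *s e t) = (\<Sum>t<n. c t *s e t) - cn *s (\<Sum>t<n. e t)"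
        by (simp add: vector_sub_rdistrib sum_subtractf vec.scale_sum_right)
      have v'eq: "v' = (- cn) *s v0 + (\<Sum>t<n. (c t - cn) *s e t)"
        unfolding v'_def Tv S1 using H
        by (simp add: sum.lessThan_Suc cn_def vector_add_ldistrib vector_smult_lneg algebra_simps)
      have v'0: "v' \<in> g0" unfolding v'_def using H ee_mem[OF h0] by (intro g0_diff g0_scale) auto
      have v'S: "\<forall>k\<in>S. br k v' = 0"
      proof
        fix k assume k: "k \<in> S"
        then have k0: "k \<in> g0" and ka: "k \<in> a" using SA a_g0 by auto
        have kv: "br k v = 0" using H k by blast
        have "br k (br h v) = br (br k h) v + br h (br k v)" using jac00[OF k0 h0] .
        also have "\<dots> = 0" using a_comm[OF ka hA] kv by (simp add: br_zero1 br_zero2)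
        finally show "br k v' = 0" unfolding v'_def using kv by (simp add: br_diff2 br_scale2)
      qed
      have hv0: "br h ((- cn) *s v0) = 0" using H by (simp add: br_scale2 br_neg2)
      have het: "\<forall>t<n. br h ((c t - cn) *s e t) = c t *s ((c t - cn) *s e t) \<and> c t \<noteq> 0"
      proof (intro allI impI)
        fix t assume "t < n"
        then have "t < Suc n" by simp
        then have "br h (e t) = c t *s e t" "c t \<noteq> 0" using H by blast+
        then show "br h ((c t - cn) *s e t) = c t *s ((c t - cn) *s e t) \<and> c t \<noteq> 0"
          by (simp only: br_scale2 vector_smult_assoc mult.commute) simp
      qed
      have "b w v' = 0"
        by (rule Suc.IH[rule_format, of v' "(- cn) *s v0" "\<lambda>t. (c t - cn) *s e t" c])
           (intro conjI v'0 v'S hv0 het v'eq)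
      moreover have "b w v' = - cn * b w v"
        unfolding v'_def using N1[OF wa hA] by (simp add: b_diff2 b_scale2)
      moreover have "cn \<noteq> 0" using H cn_def by simp
      ultimately show "b w v = 0" by simp
    qed
  qed
  show ?thesis
  proof (intro ballI impI)
    fix u assume u: "u \<in> g0" "\<forall>k\<in>S. br k u = 0"
    have "u \<in> vec.span {x \<in> g0. \<exists>c. br h x = c *s x}" using a_diag hA u by blast
    then have "\<exists>v0 (n::nat) e c. br h v0 = 0 \<and> (\<forall>t<n. br h (e t) = c t *s e t \<and> c t \<noteq> 0) \<and> u = v0 + (\<Sum>t<n. e t)"
      by (rule rep) blast
    then obtain v0 and n :: nat and e c where R: "br h v0 = 0" "\<forall>t<n. br h (e t) = c t *s e t \<and> c t \<noteq> 0"
      "u = v0 + (\<Sum>t<n. e t)" by blast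
    show "b w u = 0" by (rule key[of n, rule_format, of u v0 e c]) (use u R in blast)
  qed
qed

lemma nondeg_a:
  assumes wa: "w \<in> a" and wo: "\<forall>h\<in>a. b h w = 0"
  shows "w = 0"
proof -
  obtain B where B: "B \<subseteq> a" "vec.independent B" "a \<subseteq> vec.span B" "card B = vec.dim a"
    by (rule vec.basis_exists)
  have "finite B" using vec.finiteI_independent[OF B(2)] .
  then obtain L where L: "set L = B" using finite_list by blast
  have PB: "\<forall>u\<in>g0. (\<forall>k\<in>set L \<union> {}. br k u = 0) \<longrightarrow> b w u = 0"
  proof (intro ballI impI)
    fix u assume u: "u \<in> g0" "\<forall>k\<in>set L \<union> {}. br k u = 0"
    have "br k u = 0" if "k \<in> vec.span B" for k
      using that
    proof (induction rule: vec.span_induct_alt)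
      case base then show ?case by (simp add: br_zero1)
    next
      case (step c x y) then show ?case using u L by (simp add: br_add1 br_scale1)
    qed
    then have "\<forall>h\<in>a. br h u = 0" using B(3) by blast
    then show "b w u = 0" using N2[OF wa wo u(1)] by blast
  qed
  have gen: "\<forall>S. S \<subseteq> a \<longrightarrow> (\<forall>u\<in>g0. (\<forall>k\<in>set L' \<union> S. br k u = 0) \<longrightarrow> b w u = 0)
      \<longrightarrow> (\<forall>u\<in>g0. (\<forall>k\<in>S. br k u = 0) \<longrightarrow> b w u = 0)" if "set L' \<subseteq> a" for L'
    using that
  proof (induction L')
    case Nil then show ?case by simp
  next
    case (Cons h L')
    show ?case
    proof (intro allI impI)
      fix S assume S: "S \<subseteq> a" "\<forall>u\<in>g0. (\<forall>k\<in>set (h # L') \<union> S. br k u = 0) \<longrightarrow> b w u = 0"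
      have hA: "h \<in> a" using Cons.prems by simp
      have "\<forall>u\<in>g0. (\<forall>k\<in>set L' \<union> insert h S. br k u = 0) \<longrightarrow> b w u = 0" using S(2) by simp
      moreover have i1: "insert h S \<subseteq> a" using S(1) hA by simp
      moreover have "set L' \<subseteq> a" using Cons.prems by simp
      ultimately have "\<forall>u\<in>g0. (\<forall>k\<in>insert h S. br k u = 0) \<longrightarrow> b w u = 0"
        using Cons.IH by blast
      then show "\<forall>u\<in>g0. (\<forall>k\<in>S. br k u = 0) \<longrightarrow> b w u = 0"
        using descent[OF hA S(1) wa] by blast
    qed
  qed
  have "\<forall>u\<in>g0. (\<forall>k\<in>{}. br k u = 0) \<longrightarrow> b w u = 0"
    using gen[of L] L B(1) PB by blast
  then have all0: "\<forall>u\<in>g0. b w u = 0" by simp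
  have "\<forall>v. b w v = 0"
  proof
    fix v obtain u u1 where "u \<in> g0" "u1 \<in> g1" "v = u + u1" using dec01 by blast
    then show "b w v = 0" using all0 b_eo[OF a_g0[OF wa]] by (simp add: b_add2)
  qed
  then show ?thesis using b_nd by blast
qed


(* weights *)
definition Y :: "'n cvec \<Rightarrow> 'n cvec" where "Y u = (1/2::complex) *s (u + \<theta> u)"
definition Z :: "'n cvec \<Rightarrow> 'n cvec" where "Z u = (1/2::complex) *s (u - \<theta> u)"
abbreviation "W \<equiv> wspace br a g1 lam"

lemma W_g1: "u \<in> W \<Longrightarrow> u \<in> g1" unfolding wspace_def by blast
lemma W_wt: "u \<in> W \<Longrightarrow> h \<in> a \<Longrightarrow> br h u = lam h *s u" unfolding wspace_def by blast

lemma h0_ex: "\<exists>h0\<in>a. lam h0 \<noteq> 0" using root1 unfolding is_root_def by blast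

lemma W2_zero: "wspace br a g0 (\<lambda>h. 2 * lam h) = {0}"
proof -
  have "\<exists>h\<in>a. 2 * lam h \<noteq> 0" using h0_ex by auto
  then show ?thesis using not_root0 unfolding is_root_def by blast
qed

lemma th_wt: "u \<in> W \<Longrightarrow> h \<in> a \<Longrightarrow> br h (\<theta> u) = (- lam h) *s \<theta> u"
proof -
  assume u: "u \<in> W" and h: "h \<in> a"
  have e: "\<theta> (br h (\<theta> u)) = (- lam h) *s u"
    using a_th[OF h] W_wt[OF u h] by (simp add: thbr thth br_neg1)
  have "br h (\<theta> u) = \<theta> (\<theta> (br h (\<theta> u)))" by (simp only: thth)
  also have "\<dots> = (- lam h) *s \<theta> u" by (simp only: e th_scale)
  finally show ?thesis .
qed

lemma Y_g1: "u \<in> W \<Longrightarrow> Y u \<in> g1" unfolding Y_def using W_g1 thg1 g1_add g1_scale by blast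
lemma Z_g1: "u \<in> W \<Longrightarrow> Z u \<in> g1" unfolding Z_def using W_g1 thg1 g1_diff g1_scale by blast
lemma hY: "u \<in> W \<Longrightarrow> h \<in> a \<Longrightarrow> br h (Y u) = lam h *s Z u"
  unfolding Y_def Z_def by (simp add: br_scale2 br_add2 W_wt th_wt vec_eq_iff algebra_simps)
lemma hZ: "u \<in> W \<Longrightarrow> h \<in> a \<Longrightarrow> br h (Z u) = lam h *s Y u"
  unfolding Y_def Z_def by (simp add: br_scale2 br_diff2 W_wt th_wt vec_eq_iff algebra_simps)
lemma thY: "\<theta> (Y u) = Y u" unfolding Y_def by (simp add: th_scale th_add thth vec_eq_iff algebra_simps)
lemma thZ: "\<theta> (Z u) = - Z u" unfolding Z_def by (simp add: th_scale th_diff thth vec_eq_iff algebra_simps)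

lemma br_WW: "u \<in> W \<Longrightarrow> v \<in> W \<Longrightarrow> br u v = 0"
proof -
  assume u: "u \<in> W" and v: "v \<in> W"
  have "br u v \<in> g0" using oo_mem W_g1 u v by blast
  moreover have "\<forall>h\<in>a. br h (br u v) = (2 * lam h) *s br u v"
  proof
    fix h assume h: "h \<in> a"
    have "br h (br u v) = br (br h u) v + br u (br h v)" using jac01[OF a_g0[OF h] W_g1[OF u]] .
    also have "\<dots> = (2 * lam h) *s br u v" using W_wt[OF u h] W_wt[OF v h]
      by (simp add: br_scale1 br_scale2; simp add: vec_eq_iff algebra_simps)
    finally show "br h (br u v) = (2 * lam h) *s br u v" .
  qed
  ultimately have "br u v \<in> wspace br a g0 (\<lambda>h. 2 * lam h)" unfolding wspace_def by blast
  then show ?thesis using W2_zero by blast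
qed

lemma br_thWW: "u \<in> W \<Longrightarrow> v \<in> W \<Longrightarrow> br (\<theta> u) (\<theta> v) = 0"
  using br_WW by (metis thbr th_zero)

lemma b_WW: "u \<in> W \<Longrightarrow> v \<in> W \<Longrightarrow> b u v = 0"
proof -
  assume u: "u \<in> W" and v: "v \<in> W"
  obtain h0 where h0: "h0 \<in> a" "lam h0 \<noteq> 0" using h0_ex by blast
  have "b (br h0 u) v = b h0 (br u v)" by (rule b_inv)
  also have "\<dots> = 0" using br_WW[OF u v] b_zero2 by simp
  finally have "lam h0 * b u v = 0" using W_wt[OF u h0(1)] by (simp add: b_scale1)
  then show ?thesis using h0(2) by simp
qed

lemma b_thth: "b (\<theta> u) v = b u (\<theta> v)"
proof -
  have "b (\<theta> u) v = b (\<theta> (\<theta> u)) (\<theta> v)" by (simp only: b_th)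
  then show ?thesis by (simp only: thth)
qed

lemma G2: "u \<in> W \<Longrightarrow> v \<in> W \<Longrightarrow> br (Y u) (Y v) = - br (Z u) (Z v)"
  unfolding Y_def Z_def
  by (simp add: br_scale1 br_scale2 br_add1 br_add2 br_diff1 br_diff2 br_WW br_thWW vec_eq_iff algebra_simps)

lemma bZZ: "u \<in> W \<Longrightarrow> v \<in> W \<Longrightarrow> b (Z u) (Z v) = - (1/2) * b u (\<theta> v)"
  unfolding Z_def
  by (simp add: b_scale1 b_scale2 b_diff1 b_diff2 b_WW b_thth thth algebra_simps)

lemma A0: "A \<in> g0" using a_g0 A_mem .
lemma bhA: "h \<in> a \<Longrightarrow> b h A = lam h" using b_ee[OF a_g0 A0] A_def by simp
lemma ll: "b A A = lam A" using A_def A_mem by blast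

lemma G1: "u \<in> W \<Longrightarrow> v \<in> W \<Longrightarrow> br (Y u) (Z v) = (- (1/2) * b u (\<theta> v)) *s A"
proof -
  assume u: "u \<in> W" and v: "v \<in> W"
  define M where "M = br (Y u) (Z v)"
  define c where "c = - (1/2) * b u (\<theta> v)"
  have M0: "M \<in> g0" unfolding M_def using oo_mem Y_g1 Z_g1 u v by blast
  have thM: "\<theta> M = - M" unfolding M_def by (simp add: thbr thY thZ br_neg2)
  have "\<forall>h\<in>a. br h M = 0"
  proof
    fix h assume h: "h \<in> a"
    have "br h M = br (br h (Y u)) (Z v) + br (Y u) (br h (Z v))"
      unfolding M_def using jac01[OF a_g0[OF h] Y_g1[OF u]] .
    also have "\<dots> = lam h *s (br (Z u) (Z v) + br (Y u) (Y v))"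
      using hY[OF u h] hZ[OF v h] by (simp add: br_scale1 br_scale2 vector_add_ldistrib)
    also have "\<dots> = 0" using G2[OF u v] by simp
    finally show "br h M = 0" .
  qed
  then have Ma: "M \<in> a" using a_intro M0 thM by blast
  have D: "M - c *s A \<in> a" using Ma A_mem a_sub vec.subspace_diff vec.subspace_scale by blast
  have "\<forall>h\<in>a. b h (M - c *s A) = 0"
  proof
    fix h assume h: "h \<in> a"
    have "b h M = b (br h (Y u)) (Z v)" unfolding M_def by (simp add: b_inv)
    also have "\<dots> = lam h * c" using hY[OF u h] bZZ[OF u v] by (simp add: b_scale1 c_def)
    finally show "b h (M - c *s A) = 0" using bhA[OF h] by (simp add: b_diff2 b_scale2)
  qed
  then have "M - c *s A = 0" using nondeg_a[OF D] by blast
  then have "M = c *s A" by simp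
  then show ?thesis unfolding M_def c_def .
qed

lemma YA: "u \<in> W \<Longrightarrow> br (Y u) A = - (b A A *s Z u)"
proof -
  assume u: "u \<in> W"
  have "br (Y u) A = - br A (Y u)" using oe_sk[OF Y_g1[OF u] A0] .
  then show ?thesis using hY[OF u A_mem] ll by simp
qed

lemma G3: "u \<in> W \<Longrightarrow> v \<in> W \<Longrightarrow> w \<in> W \<Longrightarrow>
  br (br (Y u) (Y v)) (Z w) = (b A A / 2) *s (b v (\<theta> w) *s Z u + b u (\<theta> w) *s Z v)"
proof -
  assume u: "u \<in> W" and v: "v \<in> W" and w: "w \<in> W"
  have "br (Y u) (br (Y v) (Z w)) = br (br (Y u) (Y v)) (Z w) - br (Y v) (br (Y u) (Z w))"
    using jac11[OF Y_g1[OF u] Y_g1[OF v]] .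
  then have "br (br (Y u) (Y v)) (Z w) = br (Y u) (br (Y v) (Z w)) + br (Y v) (br (Y u) (Z w))"
    by (simp add: algebra_simps)
  also have "\<dots> = (b A A / 2) *s (b v (\<theta> w) *s Z u + b u (\<theta> w) *s Z v)"
    using G1[OF v w] G1[OF u w] YA[OF u] YA[OF v]
    by (simp add: br_scale2 br_neg2; simp add: vec_eq_iff algebra_simps)
  finally show ?thesis .
qed

lemma cent: "u \<in> W \<Longrightarrow> v \<in> W \<Longrightarrow> h \<in> a \<Longrightarrow> br h (br (Y u) (Y v)) = 0"
proof -
  assume u: "u \<in> W" and v: "v \<in> W" and h: "h \<in> a"
  have "br h (br (Y u) (Y v)) = br (br h (Y u)) (Y v) + br (Y u) (br h (Y v))"
    using jac01[OF a_g0[OF h] Y_g1[OF u]] .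
  also have "\<dots> = lam h *s (br (Z u) (Y v) + br (Y u) (Z v))"
    using hY[OF u h] hY[OF v h] by (simp add: br_scale1 br_scale2 vector_add_ldistrib)
  also have "br (Z u) (Y v) = br (Y v) (Z u)" using oo_sk[OF Z_g1[OF u] Y_g1[OF v]] .
  also have "b v (\<theta> u) = - b u (\<theta> v)"
  proof -
    have "b v (\<theta> u) = - b (\<theta> u) v" using b_oo[OF W_g1[OF v] thg1[OF W_g1[OF u]]] .
    then show ?thesis by (simp add: b_thth)
  qed
  then have "br (Y v) (Z u) + br (Y u) (Z v) = 0" using G1[OF v u] G1[OF u v] by (simp add: vec_eq_iff algebra_simps)
  finally show ?thesis by simp
qed

lemma G4: "u \<in> W \<Longrightarrow> v \<in> W \<Longrightarrow> w \<in> W \<Longrightarrow>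
  br (br (Y u) (Y v)) (Y w) = (b A A / 2) *s (b v (\<theta> w) *s Y u + b u (\<theta> w) *s Y v)"
proof -
  assume u: "u \<in> W" and v: "v \<in> W" and w: "w \<in> W"
  obtain h0 where h0: "h0 \<in> a" "lam h0 \<noteq> 0" using h0_ex by blast
  define M where "M = br (Y u) (Y v)"
  have M0: "M \<in> g0" unfolding M_def using oo_mem Y_g1 u v by blast
  have "br h0 (br M (Z w)) = br (br h0 M) (Z w) + br M (br h0 (Z w))"
    using jac00[OF a_g0[OF h0(1)] M0] .
  also have "\<dots> = lam h0 *s br M (Y w)"
    using cent[OF u v h0(1)] hZ[OF w h0(1)] unfolding M_def by (simp add: br_zero1 br_scale2)
  finally have 1: "br h0 (br M (Z w)) = lam h0 *s br M (Y w)" .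
  have 2: "br h0 (br M (Z w)) = lam h0 *s ((b A A / 2) *s (b v (\<theta> w) *s Y u + b u (\<theta> w) *s Y v))"
    unfolding M_def G3[OF u v w] using hZ[OF u h0(1)] hZ[OF v h0(1)]
    by (simp add: br_scale2 br_add2; simp add: vec_eq_iff algebra_simps)
  have 3: "lam h0 *s br M (Y w) = lam h0 *s ((b A A / 2) *s (b v (\<theta> w) *s Y u + b u (\<theta> w) *s Y v))"
    using 1 2 by (rule trans[OF sym])
  then show ?thesis using h0(2) vector_mul_lcancel unfolding M_def by blast
qed

end

theorem mainTheorem8:
  fixes br :: "'n::finite cvec \<Rightarrow> 'n cvec \<Rightarrow> 'n cvec"
    and g0 g1 a :: "'n cvec set"
    and \<theta> :: "'n cvec \<Rightarrow> 'n cvec"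
    and b :: "'n cvec \<Rightarrow> 'n cvec \<Rightarrow> complex"
    and lam :: "'n cvec \<Rightarrow> complex"
    and Alam :: "'n cvec"
    and q :: nat
    and x xt y yt z zt :: "nat \<Rightarrow> 'n cvec"
  assumes pair: "reductive_symmetric_superpair br g0 g1 \<theta> b"
    and cartan: "even_cartan_subspace br g0 \<theta> a"
    and root1: "is_root br a g1 lam"
    and not_root0: "\<not> is_root br a g0 (\<lambda>h. 2 * lam h)"
    and A_mem: "Alam \<in> a"
    and A_def: "\<forall>h\<in>a. b Alam h = lam h"
    and basis_indep: "vec.independent (x ` {1..q} \<union> xt ` {1..q})"
    and basis_inj: "inj_on x {1..q}" "inj_on xt {1..q}" "x ` {1..q} \<inter> xt ` {1..q} = {}"
    and basis_span: "vec.span (x ` {1..q} \<union> xt ` {1..q}) = wspace br a g1 lam"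
    and symp: "\<forall>i\<in>{1..q}. \<forall>j\<in>{1..q}.
                 b (x i) (\<theta> (x j)) = 0 \<and> b (xt i) (\<theta> (xt j)) = 0 \<and>
                 b (x i) (\<theta> (xt j)) = 2 * kron i j"
    and decomp: "\<forall>j\<in>{1..q}. y j \<in> kpart \<theta> \<and> z j \<in> ppart \<theta> \<and> x j = y j + z j \<and>
                   yt j \<in> kpart \<theta> \<and> zt j \<in> ppart \<theta> \<and> xt j = yt j + zt j"
  shows "\<forall>i\<in>{1..q}. \<forall>j\<in>{1..q}. \<forall>k\<in>{1..q}.
     let ll = b Alam Alam in
     \<comment> \<open>(i)\<close>
     br (y i) (z j) = 0 \<and> br (yt i) (zt j) = 0 \<and>
     br (yt i) (z j) = kron i j *s Alam \<and> - br (y i) (zt j) = kron i j *s Alam \<and>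
     \<comment> \<open>(ii)\<close>
     br (y i) (y j) = - br (z i) (z j) \<and>
     br (yt i) (yt j) = - br (zt i) (zt j) \<and>
     br (y i) (yt j) = - br (z i) (zt j) \<and>
     \<comment> \<open>(iii)\<close>
     br (br (y i) (y j)) (y k) = 0 \<and> br (br (yt i) (yt j)) (yt k) = 0 \<and>
     br (br (y i) (y j)) (yt k) = ll *s (kron j k *s y i + kron i k *s y j) \<and>
     br (br (yt i) (yt j)) (y k) = - (ll *s (kron j k *s yt i + kron i k *s yt j)) \<and>
     br (br (y i) (yt j)) (y k) = - (ll *s (kron j k *s y i)) \<and>
     br (br (y i) (yt j)) (yt k) = ll *s (kron i k *s yt j) \<and>
     \<comment> \<open>(iv)\<close>
     br (br (y i) (y j)) (z k) = 0 \<and> br (br (yt i) (yt j)) (zt k) = 0 \<and>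
     br (br (y i) (y j)) (zt k) = ll *s (kron j k *s z i + kron i k *s z j) \<and>
     br (br (yt i) (yt j)) (z k) = - (ll *s (kron j k *s zt i + kron i k *s zt j)) \<and>
     br (br (y i) (yt j)) (z k) = - (ll *s (kron j k *s z i)) \<and>
     br (br (y i) (yt j)) (zt k) = ll *s (kron i k *s zt j)"
proof -
  have "SP br g0 g1 a \<theta> b lam Alam" unfolding SP_def using pair cartan root1 not_root0 A_mem A_def by blast
  then interpret P: SP br g0 g1 a \<theta> b lam Alam .
  have inW: "x i \<in> P.W \<and> xt i \<in> P.W" if "i \<in> {1..q}" for i
  proof -
    have "x i \<in> vec.span (x ` {1..q} \<union> xt ` {1..q})" "xt i \<in> vec.span (x ` {1..q} \<union> xt ` {1..q})"
      using that by (auto intro: vec.span_base)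
    then show ?thesis using basis_span by simp
  qed
  have yY: "y j = P.Y (x j) \<and> z j = P.Z (x j) \<and> yt j = P.Y (xt j) \<and> zt j = P.Z (xt j)" if "j \<in> {1..q}" for j
  proof -
    have d: "\<theta> (y j) = y j" "\<theta> (z j) = - z j" "x j = y j + z j"
      "\<theta> (yt j) = yt j" "\<theta> (zt j) = - zt j" "xt j = yt j + zt j"
      using decomp that unfolding kpart_def ppart_def by auto
    show ?thesis unfolding P.Y_def P.Z_def d(3) d(6)
      by (simp add: P.th_add d; simp add: vec_eq_iff field_simps)
  qed
  have kr: "kron i j = kron j i" for i j by (simp add: kron_def)
  have bet: "b (x i) (\<theta> (x j)) = 0 \<and> b (xt i) (\<theta> (xt j)) = 0 \<and> b (x i) (\<theta> (xt j)) = 2 * kron i j \<and>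
     b (xt i) (\<theta> (x j)) = - 2 * kron i j" if "i \<in> {1..q}" "j \<in> {1..q}" for i j
  proof -
    have g: "xt i \<in> g1" "\<theta> (x j) \<in> g1" using inW[OF that(1)] inW[OF that(2)] P.W_g1 P.thg1 by blast+
    have "b (xt i) (\<theta> (x j)) = - b (\<theta> (x j)) (xt i)" using P.b_oo[OF g] .
    also have "\<dots> = - b (x j) (\<theta> (xt i))" by (simp add: P.b_thth)
    also have "\<dots> = - 2 * kron i j" using symp that kr by simp
    finally show ?thesis using symp that by simp
  qed
  show ?thesis
    apply (intro ballI)
    subgoal premises p for i j k
  proof -
    have i: "i \<in> {1..q}" and j: "j \<in> {1..q}" and k: "k \<in> {1..q}" using p by auto
    note W = inW[OF i] inW[OF j] inW[OF k]
    have xi: "x i \<in> P.W" and xti: "xt i \<in> P.W" and xj: "x j \<in> P.W" and xtj: "xt j \<in> P.W"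
      and xk: "x k \<in> P.W" and xtk: "xt k \<in> P.W" using W by blast+
    note E = yY[OF i] yY[OF j] yY[OF k]
    note B = bet[OF i j] bet[OF i k] bet[OF j k] bet[OF j i]
    show ?thesis unfolding Let_def
    proof (intro conjI)
      show "br (y i) (z j) = 0" using P.G1[OF xi xj] E B by simp
      show "br (yt i) (zt j) = 0" using P.G1[OF xti xtj] E B by simp
      show "br (yt i) (z j) = kron i j *s Alam" using P.G1[OF xti xj] E B by simp
      show "- br (y i) (zt j) = kron i j *s Alam" using P.G1[OF xi xtj] E B by simp
      show "br (y i) (y j) = - br (z i) (z j)" using P.G2[OF xi xj] E by simp
      show "br (yt i) (yt j) = - br (zt i) (zt j)" using P.G2[OF xti xtj] E by simp
      show "br (y i) (yt j) = - br (z i) (zt j)" using P.G2[OF xi xtj] E by simp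
      show "br (br (y i) (y j)) (y k) = 0" using P.G4[OF xi xj xk] E B by simp
      show "br (br (yt i) (yt j)) (yt k) = 0" using P.G4[OF xti xtj xtk] E B by simp
      show "br (br (y i) (y j)) (yt k) = b Alam Alam *s (kron j k *s y i + kron i k *s y j)"
        using P.G4[OF xi xj xtk] E B by (simp; simp add: vec_eq_iff algebra_simps)
      show "br (br (yt i) (yt j)) (y k) = - (b Alam Alam *s (kron j k *s yt i + kron i k *s yt j))"
        using P.G4[OF xti xtj xk] E B by (simp; simp add: vec_eq_iff algebra_simps)
      show "br (br (y i) (yt j)) (y k) = - (b Alam Alam *s (kron j k *s y i))"
        using P.G4[OF xi xtj xk] E B by (simp; simp add: vec_eq_iff algebra_simps)
      show "br (br (y i) (yt j)) (yt k) = b Alam Alam *s (kron i k *s yt j)"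
        using P.G4[OF xi xtj xtk] E B by (simp; simp add: vec_eq_iff algebra_simps)
      show "br (br (y i) (y j)) (z k) = 0" using P.G3[OF xi xj xk] E B by simp
      show "br (br (yt i) (yt j)) (zt k) = 0" using P.G3[OF xti xtj xtk] E B by simp
      show "br (br (y i) (y j)) (zt k) = b Alam Alam *s (kron j k *s z i + kron i k *s z j)"
        using P.G3[OF xi xj xtk] E B by (simp; simp add: vec_eq_iff algebra_simps)
      show "br (br (yt i) (yt j)) (z k) = - (b Alam Alam *s (kron j k *s zt i + kron i k *s zt j))"
        using P.G3[OF xti xtj xk] E B by (simp; simp add: vec_eq_iff algebra_simps)
      show "br (br (y i) (yt j)) (z k) = - (b Alam Alam *s (kron j k *s z i))"
        using P.G3[OF xi xtj xk] E B by (simp; simp add: vec_eq_iff algebra_simps)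
      show "br (br (y i) (yt j)) (zt k) = b Alam Alam *s (kron i k *s zt j)"
        using P.G3[OF xi xtj xtk] E B by (simp; simp add: vec_eq_iff algebra_simps)
    qed
  qed
  done
qed

end
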